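(* Let $n\in\mathbb{N}$, $0<\beta\le n$, and let $B$ be a Young function with complementary Young function $\bar B$. Then there is a constant $C_\beta>0$ such that for all functions $f,g$ and all cubes $Q$, \[ \frac{1}{\ell(Q)^\beta}\int_Q|fg|\,d\mathcal{H}^\beta_\infty\le C_\beta\|f\|_{B,Q,\mathcal{H}^\beta_\infty}\|g\|_{\bar B,Q,\mathcal{H}^\beta_\infty}. \]
   Context: $\mathcal{H}^\beta_\infty(E)=\inf\{\sum_i\omega_\beta r_i^\beta:E\subset\bigcup_iB(x_i,r_i)\}$, $\omega_\beta=\pi^{\beta/2}/\Gamma(\beta/2+1)$; integrals against $\mathcal{H}^\beta_\infty$ are Choquet integrals $\int_\Omega h\,d\mathcal{H}^\beta_\infty=\int_0^\infty\mathcal{H}^\beta_\infty(\{x\in\Omega:h>t\})\,dt$. Cubes are axis-parallel with side length $\ell(Q)$. A Young function $B:[0,\infty)\to[0,\infty)$ is continuous, convex, strictly increasing, with $B(0)=0$ and $B(t)\to\infty$ as $t\to\infty$; its complementary function is $\bar B(t)=\sup_{s>0}\{st-B(s)\}$. The mean Luxemburg quasinorm is $\|f\|_{B,Q,\mathcal{H}^\beta_\infty}=\inf\{\lambda>0:\ell(Q)^{-\beta}\int_QB(|f|/\lambda)\,d\mathcal{H}^\beta_\infty\le1\}$. *)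

theory Defs
  imports "HOL-Analysis.Analysis"
begin

definition omega :: "real \<Rightarrow> real" where
  "omega \<beta> = pi powr (\<beta> / 2) / Gamma (\<beta> / 2 + 1)"

definition hcontent :: "real \<Rightarrow> 'a::euclidean_space set \<Rightarrow> ennreal" where
  "hcontent \<beta> E =
     (INF xr \<in> {(x :: nat \<Rightarrow> 'a, r :: nat \<Rightarrow> real).
                   (\<forall>i. 0 \<le> r i) \<and> E \<subseteq> (\<Union>i. ball (x i) (r i))}.
        (\<Sum>i. ennreal (omega \<beta> * (snd xr i) powr \<beta>)))"

definition choquet :: "real \<Rightarrow> 'a::euclidean_space set \<Rightarrow> ('a \<Rightarrow> ennreal) \<Rightarrow> ennreal" where
  "choquet \<beta> \<Omega> h = (\<integral>\<^sup>+ t. hcontent \<beta> {x \<in> \<Omega>. ennreal t < h x} * indicator {0..} t \<partial>lborel)"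

definition cube :: "'a::euclidean_space \<Rightarrow> real \<Rightarrow> 'a set" where
  "cube a l = cbox a (a + l *\<^sub>R One)"

definition young :: "(real \<Rightarrow> real) \<Rightarrow> bool" where
  "young B \<longleftrightarrow> continuous_on {0..} B \<and> convex_on {0..} B \<and> strict_mono_on {0..} B
     \<and> B 0 = 0 \<and> filterlim B at_top at_top"

definition compl_young :: "(real \<Rightarrow> real) \<Rightarrow> real \<Rightarrow> ennreal" where
  "compl_young B t = (SUP s \<in> {0<..}. ennreal (s * t - B s))"

text \<open>Mean Luxemburg quasinorm over the cube of corner a and side l (value +oo if no lambda works).\<close>
definition luxnorm :: "(real \<Rightarrow> ennreal) \<Rightarrow> real \<Rightarrow> 'a::euclidean_space \<Rightarrow> real \<Rightarrow> ('a \<Rightarrow> real) \<Rightarrow> ennreal" where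
  "luxnorm \<Phi> \<beta> a l f = (INF s \<in> {s::real. 0 < s \<and>
       ennreal (l powr (-\<beta>)) * choquet \<beta> (cube a l) (\<lambda>x. \<Phi> (\<bar>f x\<bar> / s)) \<le> 1}. ennreal s)"

end

theory Submission
  imports Defs
begin

lemma hcontent_mono:
  assumes "A \<subseteq> B" shows "hcontent \<beta> A \<le> hcontent \<beta> B"
  unfolding hcontent_def
  by (rule INF_superset_mono) (use assms in auto)

lemma hcontent_empty: "hcontent \<beta> {} = 0"
proof -
  have "hcontent \<beta> ({}::'a::euclidean_space set) \<le> 0"
    unfolding hcontent_def by (rule INF_lower2[of "(\<lambda>_. 0, \<lambda>_. 0)"]) auto
  then show ?thesis by simp
qed

lemma ennreal_less_add_eps: "(x::ennreal) < top \<Longrightarrow> 0 < d \<Longrightarrow> x < x + ennreal d"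
  by (cases x) (auto simp: ennreal_less_iff simp flip: ennreal_plus)

lemma hcontent_countable_subadd:
  fixes A :: "nat \<Rightarrow> 'a::euclidean_space set"
  shows "hcontent \<beta> (\<Union>k. A k) \<le> (\<Sum>k. hcontent \<beta> (A k))"
proof (rule ennreal_le_epsilon)
  fix e :: real
  assume fin: "(\<Sum>k. hcontent \<beta> (A k)) < top" and e: "0 < e"
  define C where "C = (\<lambda>E::'a set. {(x :: nat \<Rightarrow> 'a, r :: nat \<Rightarrow> real).
                   (\<forall>i. 0 \<le> r i) \<and> E \<subseteq> (\<Union>i. ball (x i) (r i))})"
  define S where "S = (\<lambda>xr::(nat \<Rightarrow> 'a) \<times> (nat \<Rightarrow> real). (\<Sum>i. ennreal (omega \<beta> * (snd xr i) powr \<beta>)))"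
  have hc: "hcontent \<beta> E = (INF xr\<in>C E. S xr)" for E
    unfolding hcontent_def C_def S_def by simp
  have "\<exists>p\<in>C (A k). S p < hcontent \<beta> (A k) + ennreal (e * (1/2)^Suc k)" for k
  proof -
    have "hcontent \<beta> (A k) < top" using ennreal_suminf_lessD[OF fin] .
    then have "hcontent \<beta> (A k) < hcontent \<beta> (A k) + ennreal (e * (1/2)^Suc k)"
      using e by (intro ennreal_less_add_eps) auto
    then show ?thesis unfolding hc[of "A k"] by (simp add: INF_less_iff)
  qed
  then obtain P where P: "\<And>k. P k \<in> C (A k)"
    "\<And>k. S (P k) < hcontent \<beta> (A k) + ennreal (e * (1/2)^Suc k)"
    by metis
  define X where "X = (\<lambda>n. fst (P (fst (prod_decode n))) (snd (prod_decode n)))"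
  define R where "R = (\<lambda>n. snd (P (fst (prod_decode n))) (snd (prod_decode n)))"
  have cov: "(X, R) \<in> C (\<Union>k. A k)"
  proof -
    have "0 \<le> snd (P k) j" for k j using P(1)[of k] unfolding C_def by (auto simp: case_prod_beta)
    then have "\<forall>i. 0 \<le> R i" unfolding R_def by auto
    moreover have "(\<Union>k. A k) \<subseteq> (\<Union>i. ball (X i) (R i))"
    proof
      fix y assume "y \<in> (\<Union>k. A k)"
      then obtain k where "y \<in> A k" by auto
      then obtain i where "y \<in> ball (fst (P k) i) (snd (P k) i)"
        using P(1)[of k] unfolding C_def by (auto split: prod.splits)
      then have "y \<in> ball (X (prod_encode (k, i))) (R (prod_encode (k, i)))"
        unfolding X_def R_def by simp
      then show "y \<in> (\<Union>i. ball (X i) (R i))" by blast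
    qed
    ultimately show ?thesis unfolding C_def by auto
  qed
  have "hcontent \<beta> (\<Union>k. A k) \<le> S (X, R)"
    unfolding hc by (rule INF_lower[OF cov])
  also have "S (X, R) = (\<Sum>i. (\<lambda>(k, j). ennreal (omega \<beta> * (snd (P k) j) powr \<beta>)) (prod_decode i))"
    unfolding S_def R_def by (simp add: case_prod_beta)
  also have "\<dots> = (\<Sum>k. S (P k))"
    by (rule suminf_ennreal_2dimen) (simp add: S_def)
  also have "\<dots> \<le> (\<Sum>k. hcontent \<beta> (A k) + ennreal (e * (1/2)^Suc k))"
    by (intro suminf_le) (use P(2) in \<open>auto intro: less_imp_le\<close>)
  also have "\<dots> = (\<Sum>k. hcontent \<beta> (A k)) + (\<Sum>k. ennreal (e * (1/2)^Suc k))"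
    by (rule suminf_add[symmetric]) auto
  also have "(\<Sum>k. ennreal (e * (1/2)^Suc k)) = ennreal e"
  proof -
    have "(\<lambda>k. e * (1/2::real)^Suc k) sums (e * 1)"
      by (intro sums_mult power_half_series)
    then show ?thesis using e
      by (subst suminf_ennreal2) (auto simp: sums_iff)
  qed
  finally show "hcontent \<beta> (\<Union>k. A k) \<le> (\<Sum>k. hcontent \<beta> (A k)) + ennreal e" .
qed

lemma hcontent_Un: "hcontent \<beta> (A \<union> B) \<le> hcontent \<beta> A + hcontent \<beta> B"
proof -
  define F where "F = (\<lambda>k::nat. if k = 0 then A else if k = 1 then B else {})"
  have "A \<union> B = (\<Union>k. F k)"
    unfolding F_def by (auto split: if_splits)
  then have "hcontent \<beta> (A \<union> B) \<le> (\<Sum>k. hcontent \<beta> (F k))"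
    using hcontent_countable_subadd by metis
  also have "(\<Sum>k. hcontent \<beta> (F k)) = (\<Sum>k<2. hcontent \<beta> (F k))"
    by (rule suminf_finite) (auto simp: F_def hcontent_empty)
  also have "\<dots> = hcontent \<beta> A + hcontent \<beta> B"
    by (simp add: F_def numeral_2_eq_2)
  finally show ?thesis .
qed


lemma antitone_borel:
  fixes F :: "real \<Rightarrow> ennreal"
  assumes "\<And>s t. s \<le> t \<Longrightarrow> F t \<le> F s"
  shows "F \<in> borel_measurable borel"
proof (rule borel_measurableI_greater)
  fix y
  have "is_interval {x. y < F x}"
    unfolding is_interval_1 using assms by (auto intro: less_le_trans)
  then show "{x \<in> space borel. y < F x} \<in> sets borel"
    using real_interval_borel_measurable by simp
qed

lemma choquet_mono:
  assumes "\<And>x. x \<in> \<Omega> \<Longrightarrow> h x \<le> h' x"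
  shows "choquet \<beta> \<Omega> h \<le> choquet \<beta> \<Omega> h'"
  unfolding choquet_def
proof (rule nn_integral_mono)
  fix t
  have "{x \<in> \<Omega>. ennreal t < h x} \<subseteq> {x \<in> \<Omega>. ennreal t < h' x}"
    using assms by (auto intro: less_le_trans)
  then show "hcontent \<beta> {x \<in> \<Omega>. ennreal t < h x} * indicator {0..} t
      \<le> hcontent \<beta> {x \<in> \<Omega>. ennreal t < h' x} * indicator {0..} t"
    by (intro mult_right_mono hcontent_mono) auto
qed

lemma choquet_markov:
  assumes "0 \<le> t"
  shows "ennreal t * hcontent \<beta> {x \<in> \<Omega>. ennreal t < h x} \<le> choquet \<beta> \<Omega> h"
proof -
  have "ennreal t * hcontent \<beta> {x \<in> \<Omega>. ennreal t < h x}
      = (\<integral>\<^sup>+ s. hcontent \<beta> {x \<in> \<Omega>. ennreal t < h x} * indicator {0..<t} s \<partial>lborel)"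
    using assms by (subst nn_integral_cmult_indicator) (auto simp: mult.commute)
  also have "\<dots> \<le> choquet \<beta> \<Omega> h"
    unfolding choquet_def
  proof (rule nn_integral_mono)
    fix s
    show "hcontent \<beta> {x \<in> \<Omega>. ennreal t < h x} * indicator {0..<t} s
        \<le> hcontent \<beta> {x \<in> \<Omega>. ennreal s < h x} * indicator {0..} s"
    proof (cases "0 \<le> s \<and> s < t")
      case True
      then have "{x \<in> \<Omega>. ennreal t < h x} \<subseteq> {x \<in> \<Omega>. ennreal s < h x}"
      proof -
        have "ennreal s \<le> ennreal t" using True by (intro ennreal_leI) simp
        then show ?thesis by (auto intro: le_less_trans)
      qed
      then show ?thesis using True by (simp add: hcontent_mono)
    qed auto
  qed
  finally show ?thesis .
qed

lemma choquet_null: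
  assumes "hcontent \<beta> {x \<in> \<Omega>. h x \<noteq> 0} = 0"
  shows "choquet \<beta> \<Omega> h = 0"
proof -
  have "(\<lambda>t. hcontent \<beta> {x \<in> \<Omega>. ennreal t < h x} * indicator {0..} t) = (\<lambda>_. 0)"
    (is "?f = _")
  proof
    fix t show "?f t = 0"
  proof -
    have "hcontent \<beta> {x \<in> \<Omega>. ennreal t < h x} \<le> hcontent \<beta> {x \<in> \<Omega>. h x \<noteq> 0}"
      by (rule hcontent_mono) auto
    then show ?thesis using assms by simp
  qed
  qed
  then show ?thesis unfolding choquet_def by simp
qed

lemma choquet_scale:
  fixes F :: "real \<Rightarrow> ennreal"
  assumes anti: "\<And>s t. s \<le> t \<Longrightarrow> F t \<le> F s" and d: "0 < d"
  shows "(\<integral>\<^sup>+ t. F (t / d) * indicator {0..} t \<partial>lborel)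
       = ennreal d * (\<integral>\<^sup>+ t. F t * indicator {0..} t \<partial>lborel)"
proof -
  have m1: "(\<lambda>t. F (t / d)) \<in> borel_measurable borel"
    using d by (intro antitone_borel anti) (simp add: divide_right_mono)
  have m: "(\<lambda>t. F (t / d) * indicator {0..} t) \<in> borel_measurable borel"
    using m1 by measurable
  have "(\<integral>\<^sup>+ t. F (t / d) * indicator {0..} t \<partial>lborel)
      = ennreal \<bar>d\<bar> * (\<integral>\<^sup>+ x. F ((0 + d * x) / d) * indicator {0..} (0 + d * x) \<partial>lborel)"
    by (rule nn_integral_real_affine[OF m]) (use d in auto)
  also have "(\<lambda>x. F ((0 + d * x) / d) * indicator {0..} (0 + d * x)) = (\<lambda>x. F x * indicator {0..} x)"
    using d by (auto simp: fun_eq_iff indicator_def zero_le_mult_iff)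
  finally show ?thesis using d by simp
qed

lemma choquet_sub:
  assumes c: "0 < c" and le: "\<And>x. x \<in> \<Omega> \<Longrightarrow> h x \<le> ennreal c * (h1 x + h2 x)"
  shows "choquet \<beta> \<Omega> h \<le> ennreal (2 * c) * (choquet \<beta> \<Omega> h1 + choquet \<beta> \<Omega> h2)"
proof -
  define d where "d = 2 * c"
  have d: "0 < d" using c by (simp add: d_def)
  define F where "F = (\<lambda>g t. hcontent \<beta> {x \<in> \<Omega>. ennreal t < g x})"
  have anti: "F g t \<le> F g s" if "s \<le> t" for g s t
    unfolding F_def by (rule hcontent_mono) (use that in \<open>auto intro: le_less_trans[OF ennreal_leI]\<close>)
  have meas: "(\<lambda>t. F g (t / d)) \<in> borel_measurable borel" for g
    using d by (intro antitone_borel anti) (simp add: divide_right_mono)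
  have pt: "F h t * indicator {0..} t \<le> (F h1 (t / d) * indicator {0..} t) + (F h2 (t / d) * indicator {0..} t)" for t
  proof (cases "0 \<le> t")
    case True
    have "{x \<in> \<Omega>. ennreal t < h x} \<subseteq> {x \<in> \<Omega>. ennreal (t / d) < h1 x} \<union> {x \<in> \<Omega>. ennreal (t / d) < h2 x}"
    proof (rule subsetI, rule ccontr)
      fix x assume x: "x \<in> {x \<in> \<Omega>. ennreal t < h x}"
        and nx: "x \<notin> {x \<in> \<Omega>. ennreal (t / d) < h1 x} \<union> {x \<in> \<Omega>. ennreal (t / d) < h2 x}"
      then have "h1 x \<le> ennreal (t / d)" "h2 x \<le> ennreal (t / d)" by auto
      then have "ennreal c * (h1 x + h2 x) \<le> ennreal c * (ennreal (t / d) + ennreal (t / d))"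
        by (intro mult_left_mono add_mono) auto
      also have "\<dots> = ennreal t"
        using True c d by (simp add: d_def flip: ennreal_plus ennreal_mult)
      finally show False using x le[of x] by auto
    qed
    then have "F h t \<le> F h1 (t / d) + F h2 (t / d)"
      unfolding F_def by (meson hcontent_Un hcontent_mono order_trans)
    then show ?thesis using True by simp
  qed simp
  have "choquet \<beta> \<Omega> h = (\<integral>\<^sup>+ t. F h t * indicator {0..} t \<partial>lborel)"
    unfolding choquet_def F_def ..
  also have "\<dots> \<le> (\<integral>\<^sup>+ t. (F h1 (t / d) * indicator {0..} t) + (F h2 (t / d) * indicator {0..} t) \<partial>lborel)"
    by (rule nn_integral_mono) (rule pt)
  also have "\<dots> = (\<integral>\<^sup>+ t. F h1 (t / d) * indicator {0..} t \<partial>lborel) + (\<integral>\<^sup>+ t. F h2 (t / d) * indicator {0..} t \<partial>lborel)"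
    using meas[of h1] meas[of h2] by (intro nn_integral_add) auto
  also have "\<dots> = ennreal d * choquet \<beta> \<Omega> h1 + ennreal d * choquet \<beta> \<Omega> h2"
    using choquet_scale[of "F h1" d, OF anti d] choquet_scale[of "F h2" d, OF anti d]
    unfolding choquet_def F_def by simp
  finally show ?thesis by (simp add: d_def distrib_left)
qed


lemma young_nonneg: "young B \<Longrightarrow> 0 \<le> a \<Longrightarrow> 0 \<le> B a"
  unfolding young_def by (metis atLeast_iff order_refl strict_mono_on_leD)

lemma young_ineq:
  assumes B: "young B" and a: "0 \<le> a" and b: "0 \<le> b"
  shows "ennreal (a * b) \<le> ennreal (B a) + compl_young B b"
proof (cases "a = 0")
  case True then show ?thesis by simp
next
  case False
  then have "0 < a" using a by simp
  then have c: "ennreal (a * b - B a) \<le> compl_young B b"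
    unfolding compl_young_def by (intro SUP_upper2[of a]) auto
  have Ba: "0 \<le> B a" using young_nonneg[OF B a] .
  have "ennreal (a * b) \<le> ennreal (B a) + ennreal (a * b - B a)"
  proof (cases "B a \<le> a * b")
    case True then show ?thesis using Ba by (simp flip: ennreal_plus)
  next
    case False then show ?thesis by (simp add: ennreal_leI add_increasing2)
  qed
  then show ?thesis using c by (meson add_left_mono order_trans)
qed

lemma pointwise:
  assumes B: "young B" and l: "0 < lam" and m: "0 < mu"
  shows "ennreal \<bar>u * v\<bar> \<le> ennreal (lam * mu) * (ennreal (B (\<bar>u\<bar> / lam)) + compl_young B (\<bar>v\<bar> / mu))"
proof -
  have "ennreal \<bar>u * v\<bar> = ennreal (lam * mu) * ennreal ((\<bar>u\<bar> / lam) * (\<bar>v\<bar> / mu))"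
    using l m by (simp add: abs_mult flip: ennreal_mult)
  also have "\<dots> \<le> ennreal (lam * mu) * (ennreal (B (\<bar>u\<bar> / lam)) + compl_young B (\<bar>v\<bar> / mu))"
    using l m by (intro mult_left_mono young_ineq[OF B]) auto
  finally show ?thesis .
qed

lemma bound:
  fixes f g :: "'a::euclidean_space \<Rightarrow> real"
  assumes B: "young B" and l: "0 < lam" and m: "0 < mu"
    and hf: "ennreal (L) * choquet \<beta> Q (\<lambda>x. ennreal (B (\<bar>f x\<bar> / lam))) \<le> 1"
    and hg: "ennreal (L) * choquet \<beta> Q (\<lambda>x. compl_young B (\<bar>g x\<bar> / mu)) \<le> 1"
  shows "ennreal L * choquet \<beta> Q (\<lambda>x. ennreal \<bar>f x * g x\<bar>) \<le> ennreal 4 * ennreal lam * ennreal mu"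
proof -
  let ?c1 = "choquet \<beta> Q (\<lambda>x. ennreal (B (\<bar>f x\<bar> / lam)))"
  let ?c2 = "choquet \<beta> Q (\<lambda>x. compl_young B (\<bar>g x\<bar> / mu))"
  have "choquet \<beta> Q (\<lambda>x. ennreal \<bar>f x * g x\<bar>) \<le> ennreal (2 * (lam * mu)) * (?c1 + ?c2)"
    using l m by (intro choquet_sub pointwise[OF B]) auto
  then have "ennreal L * choquet \<beta> Q (\<lambda>x. ennreal \<bar>f x * g x\<bar>)
      \<le> ennreal L * (ennreal (2 * (lam * mu)) * (?c1 + ?c2))"
    by (rule mult_left_mono) simp
  also have "\<dots> = ennreal (2 * (lam * mu)) * (ennreal L * ?c1 + ennreal L * ?c2)"
    by (simp add: algebra_simps)
  also have "\<dots> \<le> ennreal (2 * (lam * mu)) * (1 + 1)"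
    by (intro mult_left_mono add_mono hf hg) simp
  also have "\<dots> = ennreal 4 * ennreal lam * ennreal mu"
    using l m by (simp add: ennreal_mult mult_ac)
  finally show ?thesis .
qed

lemma null_from_zero_norm:
  fixes g :: "'a::euclidean_space \<Rightarrow> real"
  assumes grow: "\<And>M. \<exists>T. \<forall>x\<ge>T. ennreal M \<le> \<Phi> x"
    and l: "0 < l"
    and z: "luxnorm \<Phi> \<beta> a l g = 0"
  shows "hcontent \<beta> {x \<in> cube a l. g x \<noteq> 0} = 0"
proof -
  let ?Q = "cube a l"
  have eps: "hcontent \<beta> {x \<in> ?Q. \<bar>g x\<bar> > \<epsilon>} = 0" if \<epsilon>: "0 < \<epsilon>" for \<epsilon>
  proof -
    have EPS: "hcontent \<beta> {x \<in> ?Q. \<bar>g x\<bar> > \<epsilon>} \<le> 0 + ennreal e" if e: "0 < e" for e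
    proof -
      define M where "M = 2 * l powr \<beta> / e"
      have M: "0 < M" using e l by (simp add: M_def)
      obtain T0 where T0: "\<And>x. x \<ge> T0 \<Longrightarrow> ennreal M \<le> \<Phi> x" using grow by blast
      define T where "T = max T0 1"
      have T: "0 < T" "\<And>x. x \<ge> T \<Longrightarrow> ennreal M \<le> \<Phi> x"
        using T0 by (auto simp: T_def)
      have "(INF s \<in> {s::real. 0 < s \<and> ennreal (l powr (-\<beta>)) * choquet \<beta> ?Q (\<lambda>x. \<Phi> (\<bar>g x\<bar> / s)) \<le> 1}. ennreal s) < ennreal (\<epsilon> / T)"
        using z \<epsilon> T unfolding luxnorm_def by simp
      then obtain mu where mu: "0 < mu" "ennreal (l powr (-\<beta>)) * choquet \<beta> ?Q (\<lambda>x. \<Phi> (\<bar>g x\<bar> / mu)) \<le> 1"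
        "ennreal mu < ennreal (\<epsilon> / T)"
        by (auto simp: INF_less_iff)
      have mlt: "mu < \<epsilon> / T" using mu(1,3) by (simp add: ennreal_less_iff)
      have sub: "{x \<in> ?Q. \<bar>g x\<bar> > \<epsilon>} \<subseteq> {x \<in> ?Q. ennreal (M / 2) < \<Phi> (\<bar>g x\<bar> / mu)}"
      proof safe
        fix x assume "x \<in> ?Q" "\<bar>g x\<bar> > \<epsilon>"
        have "T < \<epsilon> / mu" using mlt mu(1) T(1) \<epsilon> by (simp add: field_simps)
        also have "\<epsilon> / mu < \<bar>g x\<bar> / mu" using \<open>\<bar>g x\<bar> > \<epsilon>\<close> mu(1) by (simp add: divide_strict_right_mono)
        finally have "ennreal M \<le> \<Phi> (\<bar>g x\<bar> / mu)" using T(2) by simp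
        moreover have "ennreal (M / 2) < ennreal M" using M by (simp add: ennreal_less_iff)
        ultimately show "ennreal (M / 2) < \<Phi> (\<bar>g x\<bar> / mu)" by (rule less_le_trans[rotated])
      qed
      have "ennreal (M / 2) * hcontent \<beta> {x \<in> ?Q. \<bar>g x\<bar> > \<epsilon>}
          \<le> ennreal (M / 2) * hcontent \<beta> {x \<in> ?Q. ennreal (M / 2) < \<Phi> (\<bar>g x\<bar> / mu)}"
        by (intro mult_left_mono hcontent_mono sub) simp
      also have "\<dots> \<le> choquet \<beta> ?Q (\<lambda>x. \<Phi> (\<bar>g x\<bar> / mu))"
        using M by (intro choquet_markov) simp
      finally have "ennreal (l powr (-\<beta>)) * (ennreal (M / 2) * hcontent \<beta> {x \<in> ?Q. \<bar>g x\<bar> > \<epsilon>})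
          \<le> ennreal (l powr (-\<beta>)) * choquet \<beta> ?Q (\<lambda>x. \<Phi> (\<bar>g x\<bar> / mu))"
        by (rule mult_left_mono) simp
      then have "ennreal (l powr (-\<beta>)) * (ennreal (M / 2) * hcontent \<beta> {x \<in> ?Q. \<bar>g x\<bar> > \<epsilon>}) \<le> 1"
        using mu(2) by (rule order_trans)
      then have "ennreal (l powr (-\<beta>) * (M / 2)) * hcontent \<beta> {x \<in> ?Q. \<bar>g x\<bar> > \<epsilon>} \<le> 1"
      proof -
        have "ennreal (l powr (-\<beta>) * (M / 2)) = ennreal (l powr (-\<beta>)) * ennreal (M / 2)"
          by (rule ennreal_mult) (use M in auto)
        moreover have "ennreal (l powr (-\<beta>)) * ennreal (M / 2) * hcontent \<beta> {x \<in> ?Q. \<bar>g x\<bar> > \<epsilon>} \<le> 1"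
          using \<open>ennreal (l powr (-\<beta>)) * (ennreal (M / 2) * hcontent \<beta> {x \<in> ?Q. \<bar>g x\<bar> > \<epsilon>}) \<le> 1\<close>
          by (simp only: mult.assoc)
        ultimately show ?thesis by (simp only:)
      qed
      moreover have "l powr (-\<beta>) * (M / 2) = 1 / e"
      proof -
        have p: "0 < l powr \<beta>" using l by simp
        have "l powr (-\<beta>) * (M / 2) = inverse (l powr \<beta>) * (l powr \<beta> / e)"
          unfolding M_def powr_minus by simp
        also have "\<dots> = 1 / e" using p by (simp add: field_simps)
        finally show ?thesis .
      qed
      ultimately have H1: "ennreal (1 / e) * hcontent \<beta> {x \<in> ?Q. \<bar>g x\<bar> > \<epsilon>} \<le> 1"
        by (simp only:)
      have "ennreal e * (ennreal (1 / e) * hcontent \<beta> {x \<in> ?Q. \<bar>g x\<bar> > \<epsilon>}) \<le> ennreal e * 1"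
        by (rule mult_left_mono[OF H1]) simp
      then have H2: "(ennreal e * ennreal (1 / e)) * hcontent \<beta> {x \<in> ?Q. \<bar>g x\<bar> > \<epsilon>} \<le> ennreal e"
        by (simp only: mult.assoc mult_1_right)
      have "ennreal e * ennreal (1 / e) = 1"
        by (subst ennreal_mult[symmetric]) (use e in auto)
      with H2 show ?thesis by simp
    qed
    have "hcontent \<beta> {x \<in> ?Q. \<bar>g x\<bar> > \<epsilon>} \<le> 0"
      by (rule ennreal_le_epsilon, rule EPS, assumption)
    then show ?thesis by simp
  qed
  have seteq: "{x \<in> ?Q. g x \<noteq> 0} = (\<Union>k::nat. {x \<in> ?Q. \<bar>g x\<bar> > 1 / Suc k})"
  proof safe
    fix x assume "x \<in> ?Q" "g x \<noteq> 0"
    then have "0 < \<bar>g x\<bar>" by simp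
    then obtain k :: nat where "1 / Suc k < \<bar>g x\<bar>"
      by (rule nat_approx_posE) simp
    then show "x \<in> (\<Union>k::nat. {x \<in> ?Q. \<bar>g x\<bar> > 1 / Suc k})" using \<open>x \<in> ?Q\<close> by blast
  qed auto
  have "hcontent \<beta> (\<Union>k::nat. {x \<in> ?Q. \<bar>g x\<bar> > 1 / Suc k}) \<le> (\<Sum>k. hcontent \<beta> {x \<in> ?Q. \<bar>g x\<bar> > 1 / Suc k})"
    by (rule hcontent_countable_subadd)
  then have "hcontent \<beta> {x \<in> ?Q. g x \<noteq> 0} \<le> (\<Sum>k. hcontent \<beta> {x \<in> ?Q. \<bar>g x\<bar> > 1 / Suc k})"
    unfolding seteq .
  also have "\<dots> = 0"
  proof -
    have "hcontent \<beta> {x \<in> ?Q. \<bar>g x\<bar> > 1 / Suc k} = 0" for k :: nat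
      by (rule eps) simp
    then show ?thesis by simp
  qed
  finally show ?thesis by simp
qed


lemma div_le_ennreal: "(b::ennreal) \<noteq> 0 \<Longrightarrow> b < top \<Longrightarrow> a / b \<le> c \<longleftrightarrow> a \<le> c * b"
  by (metis ennreal_mult_le_mult_iff ennreal_times_divide mult.commute
    mult_divide_eq_ennreal top.not_eq_extremum)

lemma INF2:
  fixes X :: ennreal and S T :: "real set"
  assumes S: "S \<noteq> {}" and T: "T \<noteq> {}" and Sp: "\<And>s. s \<in> S \<Longrightarrow> 0 < s" and Tp: "\<And>t. t \<in> T \<Longrightarrow> 0 < t"
    and le: "\<And>s t. s \<in> S \<Longrightarrow> t \<in> T \<Longrightarrow> X \<le> ennreal s * ennreal t"
  shows "X \<le> (INF s\<in>S. ennreal s) * (INF t\<in>T. ennreal t)"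
proof -
  define J where "J = (INF t\<in>T. ennreal t)"
  have step1: "X \<le> ennreal s * J" if s: "s \<in> S" for s
  proof -
    have sp: "ennreal s \<noteq> 0" "ennreal s < top" using Sp[OF s] by auto
    have "X / ennreal s \<le> J"
      unfolding J_def
    proof (rule INF_greatest)
      fix t assume "t \<in> T"
      then show "X / ennreal s \<le> ennreal t"
        by (subst div_le_ennreal[OF sp]) (metis mult.commute le[OF s])
    qed
    then show ?thesis using sp by (simp add: div_le_ennreal mult.commute)
  qed
  obtain t0 where t0: "t0 \<in> T" using T by auto
  have Jtop: "J < top"
    using t0 unfolding J_def by (meson INF_lower ennreal_less_top le_less_trans)
  show ?thesis
  proof (cases "J = 0")
    case True
    obtain s0 where "s0 \<in> S" using S by auto
    then have "X = 0" using step1[of s0] True by simp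
    then show ?thesis by simp
  next
    case False
    have "X / J \<le> (INF s\<in>S. ennreal s)"
    proof (rule INF_greatest)
      fix s assume "s \<in> S"
      then show "X / J \<le> ennreal s" using step1 False Jtop by (simp add: div_le_ennreal)
    qed
    then show ?thesis using False Jtop by (simp add: div_le_ennreal J_def)
  qed
qed

lemma young_grow: "young B \<Longrightarrow> \<exists>T. \<forall>x\<ge>T. ennreal M \<le> ennreal (B x)"
  unfolding young_def filterlim_at_top eventually_at_top_linorder
  by (meson ennreal_leI)

lemma compl_grow: "young B \<Longrightarrow> \<exists>T. \<forall>x\<ge>T. ennreal M \<le> compl_young B x"
proof (intro exI allI impI)
  fix x assume "M + B 1 \<le> x"
  then have "ennreal M \<le> ennreal (1 * x - B 1)" by (intro ennreal_leI) simp
  also have "\<dots> \<le> compl_young B x"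
    unfolding compl_young_def by (intro SUP_upper2[of 1]) auto
  finally show "ennreal M \<le> compl_young B x" .
qed

lemma choquet_prod_null:
  assumes "hcontent \<beta> {x \<in> Q. g x \<noteq> 0} = 0"
  shows "choquet \<beta> Q (\<lambda>x. ennreal \<bar>f x * g x\<bar>) = 0"
proof (rule choquet_null)
  have "hcontent \<beta> {x \<in> Q. ennreal \<bar>f x * g x\<bar> \<noteq> 0} \<le> hcontent \<beta> {x \<in> Q. g x \<noteq> 0}"
    by (rule hcontent_mono) auto
  then show "hcontent \<beta> {x \<in> Q. ennreal \<bar>f x * g x\<bar> \<noteq> 0} = 0" using assms by simp
qed

theorem lemma3p3:
  fixes \<beta> :: real
  assumes "0 < \<beta>" and "\<beta> \<le> real DIM('a::euclidean_space)"
  shows "\<exists>C>0. \<forall>B. young B \<longrightarrow>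
           (\<forall>(f::'a \<Rightarrow> real) g a l. 0 < l \<longrightarrow>
              ennreal (l powr (-\<beta>)) * choquet \<beta> (cube a l) (\<lambda>x. ennreal \<bar>f x * g x\<bar>)
              \<le> ennreal C * luxnorm (\<lambda>t. ennreal (B t)) \<beta> a l f
                  * luxnorm (compl_young B) \<beta> a l g)"
proof (intro exI[of _ 4] conjI allI impI)
  fix B :: "real \<Rightarrow> real" and f g :: "'a \<Rightarrow> real" and a :: 'a and l :: real
  assume B: "young B" and l: "0 < l"
  let ?Q = "cube a l"
  let ?X = "ennreal (l powr (-\<beta>)) * choquet \<beta> ?Q (\<lambda>x. ennreal \<bar>f x * g x\<bar>)"
  define S where "S = {s::real. 0 < s \<and> ennreal (l powr (-\<beta>)) * choquet \<beta> ?Q (\<lambda>x. ennreal (B (\<bar>f x\<bar> / s))) \<le> 1}"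
  define T where "T = {s::real. 0 < s \<and> ennreal (l powr (-\<beta>)) * choquet \<beta> ?Q (\<lambda>x. compl_young B (\<bar>g x\<bar> / s)) \<le> 1}"
  have nf: "luxnorm (\<lambda>t. ennreal (B t)) \<beta> a l f = (INF s\<in>S. ennreal s)"
    unfolding luxnorm_def S_def ..
  have ng: "luxnorm (compl_young B) \<beta> a l g = (INF s\<in>T. ennreal s)"
    unfolding luxnorm_def T_def ..
  have bnd: "?X \<le> ennreal 4 * ennreal s * ennreal t" if "s \<in> S" "t \<in> T" for s t
    using that unfolding S_def T_def by (intro bound[OF B]) auto
  show "ennreal 4 * luxnorm (\<lambda>t. ennreal (B t)) \<beta> a l f * luxnorm (compl_young B) \<beta> a l g \<ge> ?X"
  proof (cases "S = {}")
    case Sempty: True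
    show ?thesis
    proof (cases "luxnorm (compl_young B) \<beta> a l g = 0")
      case True
      have "hcontent \<beta> {x \<in> ?Q. g x \<noteq> 0} = 0"
        by (rule null_from_zero_norm[OF compl_grow[OF B] l True])
      then have "choquet \<beta> ?Q (\<lambda>x. ennreal \<bar>f x * g x\<bar>) = 0" by (rule choquet_prod_null)
      then have "?X = 0" by simp
      then show ?thesis by (metis zero_le)
    next
      case False
      have "luxnorm (\<lambda>t. ennreal (B t)) \<beta> a l f = top" unfolding nf Sempty by simp
      then show ?thesis using False by (simp add: ennreal_mult_top ennreal_top_mult)
    qed
  next
    case Sne: False
    show ?thesis
    proof (cases "T = {}")
      case Tempty: True
      show ?thesis
      proof (cases "luxnorm (\<lambda>t. ennreal (B t)) \<beta> a l f = 0")
        case True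
        have "hcontent \<beta> {x \<in> ?Q. f x \<noteq> 0} = 0"
          by (rule null_from_zero_norm[OF young_grow[OF B] l True])
        then have "choquet \<beta> ?Q (\<lambda>x. ennreal \<bar>g x * f x\<bar>) = 0" by (rule choquet_prod_null)
        then have "?X = 0" by (simp add: mult.commute)
        then show ?thesis by (metis zero_le)
      next
        case False
        have "luxnorm (compl_young B) \<beta> a l g = top" unfolding ng Tempty by simp
        then show ?thesis using False by (simp add: ennreal_mult_top ennreal_top_mult)
      qed
    next
      case Tne: False
      have "?X / ennreal 4 \<le> (INF s\<in>S. ennreal s) * (INF s\<in>T. ennreal s)"
      proof (rule INF2[OF Sne Tne])
        fix s t assume "s \<in> S" "t \<in> T"
        then show "?X / ennreal 4 \<le> ennreal s * ennreal t"
          using bnd[of s t] by (simp add: div_le_ennreal mult_ac)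
      qed (auto simp: S_def T_def)
      then show ?thesis unfolding nf ng by (simp add: div_le_ennreal mult_ac)
    qed
  qed
qed simp

end
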